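(* Let $k\ge1$ be an integer and $a,b,c\in\mathbb{C}$ with $a-b,\ a-c,\ a-b+1,\ a-c+1\notin\{0,-1,-2,\dots\}$, $b+c+k\neq0$, and $\mathrm{Re}(a-2b-2c-2k)>1$. Define $$G_k(a,b,c)={}_3F_2\!\left(\left.\begin{array}{c}a,\ b+k,\ c+k\\ a-b+1,\ a-c+1\end{array}\right|1\right).$$ Then $$G_{k+1}(a,b,c)=\frac{a\,[a-1-2(b+c+k)]}{k\,(b+c+k)}\,G_k(a+1,b+1,c+1)-\frac{(a-b)(a-c)}{k\,(b+c+k)}\,G_k(a-1,b,c).$$
   Context: ${}_3F_2(a_1,a_2,a_3;b_1,b_2;1)=\sum_{m\ge0}\frac{(a_1)_m(a_2)_m(a_3)_m}{m!\,(b_1)_m(b_2)_m}$ with $(\alpha)_m=\Gamma(\alpha+m)/\Gamma(\alpha)$, absolutely convergent when $\mathrm{Re}(b_1+b_2-a_1-a_2-a_3)>0$. Note $G_k(a+1,b+1,c+1)={}_3F_2(a+1,b+k+1,c+k+1;a-b+1,a-c+1;1)$ and $G_k(a-1,b,c)={}_3F_2(a-1,b+k,c+k;a-b,a-c;1)$. *)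

theory Defs
  imports "HOL-Analysis.Analysis"
begin

text \<open>Generalized hypergeometric series 3F2 evaluated at 1, as the sum of the series
  (the theorem's hypotheses guarantee absolute convergence of every instance used).\<close>
definition hyp3F2_1 :: "complex \<Rightarrow> complex \<Rightarrow> complex \<Rightarrow> complex \<Rightarrow> complex \<Rightarrow> complex" where
  "hyp3F2_1 a1 a2 a3 b1 b2 =
     (\<Sum>m. pochhammer a1 m * pochhammer a2 m * pochhammer a3 m /
           (fact m * pochhammer b1 m * pochhammer b2 m))"

definition G :: "nat \<Rightarrow> complex \<Rightarrow> complex \<Rightarrow> complex \<Rightarrow> complex" where
  "G k a b c = hyp3F2_1 a (b + of_nat k) (c + of_nat k) (a - b + 1) (a - c + 1)"

end

theory Submission
  imports Defs
begin

definition hterm :: "complex \<Rightarrow> complex \<Rightarrow> complex \<Rightarrow> complex \<Rightarrow> complex \<Rightarrow> nat \<Rightarrow> complex" where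
  "hterm a1 a2 a3 b1 b2 m = pochhammer a1 m * pochhammer a2 m * pochhammer a3 m /
           (fact m * pochhammer b1 m * pochhammer b2 m)"

lemma rGamma_nz: "\<forall>n::nat. z \<noteq> - of_nat n \<Longrightarrow> rGamma (z::complex) \<noteq> 0"
  by (metis nonpos_Ints_cases' rGamma_nonzero)

lemma poch_nz: "\<forall>n::nat. z \<noteq> - of_nat n \<Longrightarrow> pochhammer (z::complex) m \<noteq> 0"
  by (auto simp: pochhammer_eq_0_iff)

lemma hterm_Suc_eq:
  assumes b1: "\<forall>n::nat. b1 \<noteq> - of_nat n" and b2: "\<forall>n::nat. b2 \<noteq> - of_nat n" and n: "n > 0"
  shows "hterm a1 a2 a3 b1 b2 (Suc n) =
     (rGamma_series a1 n * rGamma_series a2 n * rGamma_series a3 n / (rGamma_series b1 n * rGamma_series b2 n))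
     / of_nat (Suc n) * exp ((a1 + a2 + a3 - b1 - b2) * of_real (ln (of_nat n)))"
proof -
  define L where "L = (of_real (ln (of_nat n)) :: complex)"
  have nz1: "pochhammer b1 (n+1) \<noteq> 0" "pochhammer b2 (n+1) \<noteq> 0" using poch_nz b1 b2 by auto
  have e: "exp ((a1 + a2 + a3 - b1 - b2) * L) = exp (a1*L) * exp (a2*L) * exp (a3*L) / (exp (b1*L) * exp (b2*L))"
    by (simp add: algebra_simps exp_add exp_diff flip: exp_add exp_diff)
  show ?thesis
    unfolding hterm_def rGamma_series_def L_def[symmetric] e
    using nz1 by (simp add: field_simps fact_Suc del: of_nat_Suc)
qed

lemma hterm_bound:
  assumes b1: "\<forall>n::nat. b1 \<noteq> - of_nat n" and b2: "\<forall>n::nat. b2 \<noteq> - of_nat n"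
  shows "\<exists>K. \<forall>n\<ge>1. norm (hterm a1 a2 a3 b1 b2 (Suc n)) \<le> K * real n powr (- 1 - Re (b1 + b2 - a1 - a2 - a3))"
proof -
  define \<rho> where "\<rho> n = rGamma_series a1 n * rGamma_series a2 n * rGamma_series a3 n / (rGamma_series b1 n * rGamma_series b2 n)" for n
  have "\<rho> \<longlonglongrightarrow> rGamma a1 * rGamma a2 * rGamma a3 / (rGamma b1 * rGamma b2)"
    unfolding \<rho>_def using rGamma_nz[OF b1] rGamma_nz[OF b2]
    by (intro tendsto_intros) auto
  then have "Bseq \<rho>" using convergent_imp_Bseq convergentI by blast
  then obtain K where K: "K > 0" "\<And>n. norm (\<rho> n) \<le> K" by (metis BseqE)
  show ?thesis
  proof (intro exI allI impI)
    fix n :: nat assume n: "n \<ge> 1"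
    define s where "s = Re (b1 + b2 - a1 - a2 - a3)"
    have eq: "hterm a1 a2 a3 b1 b2 (Suc n) = \<rho> n / of_nat (Suc n) * exp ((a1 + a2 + a3 - b1 - b2) * of_real (ln (of_nat n)))"
      using hterm_Suc_eq[OF b1 b2, of n] n unfolding \<rho>_def by simp
    have ex: "norm (exp ((a1 + a2 + a3 - b1 - b2) * of_real (ln (of_nat n)))) = real n powr (- s)"
      using n by (simp add: s_def powr_def)
    have "norm (hterm a1 a2 a3 b1 b2 (Suc n)) = norm (\<rho> n) / real (Suc n) * real n powr (- s)"
      unfolding eq norm_mult norm_divide ex norm_of_nat by simp
    also have "\<dots> \<le> K / real n * real n powr (- s)"
      using n K by (intro mult_right_mono frac_le) auto
    also have "\<dots> = K * real n powr (- 1 - s)"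
      using n by (simp add: powr_diff powr_minus divide_simps)
    finally show "norm (hterm a1 a2 a3 b1 b2 (Suc n)) \<le> K * real n powr (- 1 - Re (b1 + b2 - a1 - a2 - a3))"
      by (simp add: s_def)
  qed
qed

lemma hterm_summable:
  assumes b1: "\<forall>n::nat. b1 \<noteq> - of_nat n" and b2: "\<forall>n::nat. b2 \<noteq> - of_nat n"
    and s: "Re (b1 + b2 - a1 - a2 - a3) > 0"
  shows "summable (hterm a1 a2 a3 b1 b2)"
proof -
  obtain K where K: "\<And>n. n \<ge> 1 \<Longrightarrow> norm (hterm a1 a2 a3 b1 b2 (Suc n)) \<le> K * real n powr (- 1 - Re (b1 + b2 - a1 - a2 - a3))"
    using hterm_bound[OF b1 b2] by blast
  have "summable (\<lambda>n. K * real n powr (- 1 - Re (b1 + b2 - a1 - a2 - a3)))"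
    using s by (intro summable_mult) (simp add: summable_real_powr_iff)
  then have "summable (\<lambda>n. hterm a1 a2 a3 b1 b2 (Suc n))"
    by (rule summable_comparison_test_ev[rotated]) (use K in \<open>auto simp: eventually_at_top_linorder\<close>)
  then show ?thesis by (simp add: summable_Suc_iff)
qed

lemma poly_id:
  fixes a b c x :: complex and k :: nat
  defines "B \<equiv> b + of_nat k" and "C \<equiv> c + of_nat k" and "al \<equiv> a - b" and "ga \<equiv> a - c"
    and "S \<equiv> b + c + of_nat k"
  defines "\<sigma> \<equiv> \<lambda>m. m^2 + (a - 1 + B + C) * m + ((a-1)*B + (a-1)*C + B*C)"
  shows "of_nat k * S * ((a+x)*(B+1+x)*(C+1+x)) - (a-1-2*S)*(a+x+1)*((a+x)*(B+1+x)*(C+1+x))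
         + (a-1)*B*C*((al+1+x)*(ga+1+x))
       = \<sigma> (x+2) * ((a+x)*(B+1+x)*(C+1+x)) - \<sigma> (x+1) * ((x+1)*(al+1+x)*(ga+1+x))"
  unfolding assms apply simp by algebra

lemma poly_id0:
  fixes a b c :: complex and k :: nat
  defines "B \<equiv> b + of_nat k" and "C \<equiv> c + of_nat k" and "al \<equiv> a - b" and "ga \<equiv> a - c"
    and "S \<equiv> b + c + of_nat k"
  defines "\<sigma> \<equiv> \<lambda>m. m^2 + (a - 1 + B + C) * m + ((a-1)*B + (a-1)*C + B*C)"
  shows "of_nat k * S - a*(a-1-2*S) + al*ga = \<sigma> 1"
  unfolding assms apply simp by algebra

lemma hterm_shift:
  assumes "b1 \<noteq> 0" "b2 \<noteq> 0" "pochhammer (b1+1) p \<noteq> 0" "pochhammer (b2+1) p \<noteq> 0"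
  shows "b1 * b2 * hterm a1 a2 a3 b1 b2 (Suc p) * of_nat (Suc p) =
         a1 * a2 * a3 * hterm (a1+1) (a2+1) (a3+1) (b1+1) (b2+1) p"
proof -
  have f: "fact p \<noteq> (0::complex)" by simp
  show ?thesis
  unfolding hterm_def pochhammer_rec fact_Suc using assms f
  by (simp add: divide_simps del: of_nat_Suc)
qed

lemma hterm_Suc:
  assumes "pochhammer b1 p \<noteq> 0" "pochhammer b2 p \<noteq> 0" "b1 + of_nat p \<noteq> 0" "b2 + of_nat p \<noteq> 0"
  shows "hterm a1 a2 a3 b1 b2 (Suc p) * (of_nat (Suc p) * (b1 + of_nat p) * (b2 + of_nat p)) =
         hterm a1 a2 a3 b1 b2 p * ((a1 + of_nat p) * (a2 + of_nat p) * (a3 + of_nat p))"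
proof -
  have f: "fact p \<noteq> (0::complex)" by simp
  show ?thesis
  unfolding hterm_def pochhammer_Suc fact_Suc using assms f
  by (simp add: divide_simps del: of_nat_Suc)
qed

lemma powr_lim0: "(s::real) > 1 \<Longrightarrow> (\<lambda>n. c * real n powr (1 - s)) \<longlonglongrightarrow> 0"
  apply (rule tendsto_mult_right_zero) apply (rule tendsto_neg_powr) apply simp by (rule filterlim_real_sequentially)

theorem mainTheorem10:
  fixes k :: nat and a b c :: complex
  assumes "k \<ge> 1"
    and "\<forall>n::nat. a - b \<noteq> - of_nat n"
    and "\<forall>n::nat. a - c \<noteq> - of_nat n"
    and "\<forall>n::nat. a - b + 1 \<noteq> - of_nat n"
    and "\<forall>n::nat. a - c + 1 \<noteq> - of_nat n"
    and "b + c + of_nat k \<noteq> 0"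
    and "Re (a - 2 * b - 2 * c - 2 * of_nat k) > 1"
  shows "G (k + 1) a b c =
           a * (a - 1 - 2 * (b + c + of_nat k)) / (of_nat k * (b + c + of_nat k)) * G k (a + 1) (b + 1) (c + 1)
         - (a - b) * (a - c) / (of_nat k * (b + c + of_nat k)) * G k (a - 1) b c"
proof -
  note h2 = assms(2) and h3 = assms(3) and h4 = assms(4) and h5 = assms(5)
  define B where "B = b + of_nat k"
  define C where "C = c + of_nat k"
  define al where "al = a - b"
  define ga where "ga = a - c"
  define S where "S = b + c + of_nat k"
  define \<sigma> where "\<sigma> = (\<lambda>m::complex. m^2 + (a - 1 + B + C) * m + ((a-1)*B + (a-1)*C + B*C))"
  define t where "t = hterm a (b + of_nat (k+1)) (c + of_nat (k+1)) (a - b + 1) (a - c + 1)"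
  define u where "u = hterm (a+1) (b + 1 + of_nat k) (c + 1 + of_nat k) (a + 1 - (b + 1) + 1) (a + 1 - (c + 1) + 1)"
  define v where "v = hterm (a-1) (b + of_nat k) (c + of_nat k) (a - 1 - b + 1) (a - 1 - c + 1)"
  have t': "t = hterm a (B+1) (C+1) (al+1) (ga+1)"
    unfolding t_def B_def C_def al_def ga_def by (simp add: algebra_simps)
  have u': "u = hterm (a+1) (B+1) (C+1) (al+1) (ga+1)"
    unfolding u_def B_def C_def al_def ga_def by (simp add: algebra_simps)
  have v': "v = hterm (a-1) B C al ga"
    unfolding v_def B_def C_def al_def ga_def by (simp add: algebra_simps)
  have al_nz: "\<forall>n::nat. al \<noteq> - of_nat n" using h2 by (simp add: al_def)
  have ga_nz: "\<forall>n::nat. ga \<noteq> - of_nat n" using h3 by (simp add: ga_def)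
  have al1_nz: "\<forall>n::nat. al + 1 \<noteq> - of_nat n" using h4 by (simp add: al_def)
  have ga1_nz: "\<forall>n::nat. ga + 1 \<noteq> - of_nat n" using h5 by (simp add: ga_def)
  have al0: "al \<noteq> 0" and ga0: "ga \<noteq> 0" using al_nz[rule_format, of 0] ga_nz[rule_format, of 0] by auto
  have pal: "pochhammer (al+1) n \<noteq> 0" "pochhammer (ga+1) n \<noteq> 0"
       "pochhammer al n \<noteq> 0" "pochhammer ga n \<noteq> 0" for n
    using poch_nz[OF al1_nz] poch_nz[OF ga1_nz] poch_nz[OF al_nz] poch_nz[OF ga_nz] by auto
  have L1: "a * u n = (a + of_nat n) * t n" for n
  proof -
    have "a * pochhammer (a+1) n = pochhammer a n * (a + of_nat n)"
      by (metis pochhammer_rec pochhammer_Suc)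
    note E = this
    have "a * u n = (a * pochhammer (a+1) n) * pochhammer (B+1) n * pochhammer (C+1) n /
        (fact n * pochhammer (al+1) n * pochhammer (ga+1) n)" unfolding u' hterm_def by (simp add: mult.assoc)
    also have "\<dots> = (pochhammer a n * (a + of_nat n)) * pochhammer (B+1) n * pochhammer (C+1) n /
        (fact n * pochhammer (al+1) n * pochhammer (ga+1) n)" by (simp only: E)
    also have "\<dots> = (a + of_nat n) * t n" unfolding t' hterm_def by (simp add: ac_simps)
    finally show ?thesis .
  qed
  have L2: "al * ga * v (Suc p) * of_nat (Suc p) = (a-1) * B * C * t p" for p
    using hterm_shift[of al ga p "a-1" B C] al0 ga0 pal[of p] unfolding v' t' by simp
  have L3: "t (Suc p) * (of_nat (Suc p) * (al + 1 + of_nat p) * (ga + 1 + of_nat p))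
      = t p * ((a + of_nat p) * (B + 1 + of_nat p) * (C + 1 + of_nat p))" for p
  proof -
    have "al + 1 + of_nat p \<noteq> 0" "ga + 1 + of_nat p \<noteq> 0"
      using al1_nz[rule_format, of p] ga1_nz[rule_format, of p] by (auto simp: add_eq_0_iff)
    then show ?thesis unfolding t' using hterm_Suc[of "al+1" p "ga+1"] pal[of p] by simp
  qed
  define X where "X n = of_nat k * S * t n - a*(a-1-2*S) * u n + al*ga* v n" for n
  define R where "R n = (if n = 0 then 0 else \<sigma> (of_nat n) * t (n-1))" for n
  have tele: "X n = R (Suc n) - R n" for n
  proof (cases n)
    case 0
    have "t 0 = 1" "u 0 = 1" "v 0 = 1" unfolding t_def u_def v_def hterm_def by simp_all
    then have "X 0 = of_nat k * S - a*(a-1-2*S) + al*ga" unfolding X_def by simp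
    also have "\<dots> = \<sigma> 1" unfolding S_def al_def ga_def \<sigma>_def B_def C_def by simp algebra
    finally show ?thesis using 0 \<open>t 0 = 1\<close> by (simp add: R_def)
  next
    case (Suc p)
    define x where "x = (of_nat p :: complex)"
    define N where "N = (a + x) * (B + 1 + x) * (C + 1 + x)"
    define D where "D = (x + 1) * (al + 1 + x) * (ga + 1 + x)"
    have x1: "x + 1 \<noteq> 0" unfolding x_def by (metis of_nat_Suc of_nat_eq_0_iff add.commute nat.distinct(1))
    have Dnz: "D \<noteq> 0"
      using al1_nz[rule_format, of p] ga1_nz[rule_format, of p] x1 unfolding D_def x_def
      by (auto simp: add_eq_0_iff)
    have tD: "t (Suc p) * D = t p * N" using L3[of p] unfolding D_def N_def x_def by (simp add: ac_simps)
    have eU: "a * u (Suc p) = (a + x + 1) * t (Suc p)" using L1[of "Suc p"] unfolding x_def by (simp add: ac_simps)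
    have eV: "al * ga * v (Suc p) = (a-1)*B*C * t p / (x + 1)"
      using L2[of p] x1 unfolding x_def by (simp add: field_simps)
    have E1: "X (Suc p) = of_nat k * S * t (Suc p) - (a-1-2*S)*(a + x + 1) * t (Suc p) + (a-1)*B*C * t p / (x + 1)"
      unfolding X_def using eU eV by (metis (no_types, lifting) mult.assoc mult.commute)
    have P: "of_nat k * S * N - (a-1-2*S)*(a+x+1)*N + (a-1)*B*C*((al+1+x)*(ga+1+x))
       = \<sigma> (x+2) * N - \<sigma> (x+1) * D"
      unfolding N_def D_def S_def al_def ga_def \<sigma>_def B_def C_def by simp algebra
    have "(X (Suc p) - (\<sigma> (x+2) * t (Suc p) - \<sigma> (x+1) * t p)) * D =
       (of_nat k * S - (a-1-2*S)*(a+x+1) - \<sigma> (x+2)) * (t (Suc p) * D)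
       + ((a-1)*B*C*((al+1+x)*(ga+1+x)) + \<sigma> (x+1) * D) * t p"
      unfolding E1 using x1 by (simp add: D_def field_simps)
    also have "\<dots> = t p * ((of_nat k * S * N - (a-1-2*S)*(a+x+1)*N + (a-1)*B*C*((al+1+x)*(ga+1+x)))
        - (\<sigma> (x+2) * N - \<sigma> (x+1) * D))"
      unfolding tD by (simp add: algebra_simps)
    also have "\<dots> = 0" using P by simp
    finally have "X (Suc p) = \<sigma> (x+2) * t (Suc p) - \<sigma> (x+1) * t p" using Dnz by simp
    then show ?thesis using Suc unfolding R_def x_def by (simp add: add.commute add.left_commute)
  qed
  define s0 where "s0 = Re ((a - b + 1) + (a - c + 1) - a - (b + of_nat (k+1)) - (c + of_nat (k+1)))"
  have s0: "s0 > 1" using assms(7) unfolding s0_def by simp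
  have sumt: "summable t" unfolding t_def
    by (rule hterm_summable[OF h4 h5]) (use s0 in \<open>simp add: s0_def\<close>)
  have hu1: "\<forall>n::nat. a + 1 - (b + 1) + 1 \<noteq> - of_nat n" using h4 by simp
  have hu2: "\<forall>n::nat. a + 1 - (c + 1) + 1 \<noteq> - of_nat n" using h5 by simp
  have sumu: "summable u" unfolding u_def
    by (rule hterm_summable[OF hu1 hu2]) (use assms(7) in \<open>simp\<close>)
  have hv1: "\<forall>n::nat. a - 1 - b + 1 \<noteq> - of_nat n" using h2 by simp
  have hv2: "\<forall>n::nat. a - 1 - c + 1 \<noteq> - of_nat n" using h3 by simp
  have sumv: "summable v" unfolding v_def
    by (rule hterm_summable[OF hv1 hv2]) (use assms(7) in \<open>simp\<close>)
  have G1: "G (k+1) a b c = suminf t" unfolding G_def hyp3F2_1_def t_def hterm_def ..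
  have G2: "G k (a+1) (b+1) (c+1) = suminf u" unfolding G_def hyp3F2_1_def u_def hterm_def ..
  have G3: "G k (a-1) b c = suminf v" unfolding G_def hyp3F2_1_def v_def hterm_def ..
  obtain K where K: "\<And>n. n \<ge> 1 \<Longrightarrow> norm (t (Suc n)) \<le> K * real n powr (- 1 - s0)"
    using hterm_bound[OF h4 h5, of a "b + of_nat (k+1)" "c + of_nat (k+1)"]
    unfolding t_def s0_def by blast
  have K0: "K \<ge> 0" using K[of 1] norm_ge_zero[of "t (Suc 1)"] by (simp del: norm_ge_zero)
  define e1 where "e1 = a - 1 + B + C"
  define e2 where "e2 = (a-1)*B + (a-1)*C + B*C"
  define M where "M = 9 * (1 + norm e1 + norm e2)"
  have \<sigma>n: "norm (\<sigma> z) \<le> norm z ^ 2 + norm e1 * norm z + norm e2" for z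
  proof -
    have "norm (\<sigma> z) \<le> norm (z^2 + e1 * z) + norm e2"
      unfolding \<sigma>_def e1_def e2_def by (rule norm_triangle_ineq)
    also have "norm (z^2 + e1 * z) \<le> norm (z^2) + norm (e1 * z)" by (rule norm_triangle_ineq)
    finally show ?thesis by (simp add: norm_mult norm_power)
  qed
  have \<sigma>b: "norm (\<sigma> (of_nat (Suc (Suc n)))) \<le> M * real n ^ 2" if n: "n \<ge> 1" for n
  proof -
    define m where "m = real (Suc (Suc n))"
    have m1: "1 \<le> m" and m3: "m \<le> 3 * real n" using n by (auto simp: m_def)
    have "norm (\<sigma> (of_nat (Suc (Suc n)))) \<le> m ^ 2 + norm e1 * m + norm e2"
      using \<sigma>n[of "of_nat (Suc (Suc n))"] unfolding m_def by (simp only: norm_of_nat)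
    also have "\<dots> \<le> (1 + norm e1 + norm e2) * m ^ 2"
    proof -
      have "m \<le> m^2" "1 \<le> m^2" using m1 by (auto simp: power2_eq_square intro: order_trans[OF _ mult_right_mono[of 1 m m]])
      then have "norm e1 * m \<le> norm e1 * m^2" "norm e2 * 1 \<le> norm e2 * m^2"
        by (intro mult_left_mono; simp)+
      then show ?thesis by (simp add: algebra_simps)
    qed
    also have "\<dots> \<le> (1 + norm e1 + norm e2) * (9 * real n ^ 2)"
    proof (rule mult_left_mono)
      have "m^2 \<le> (3 * real n)^2" using m1 m3 by (intro power_mono) auto
      then show "m^2 \<le> 9 * real n ^ 2" by (simp add: power_mult_distrib)
    qed auto
    finally show ?thesis by (simp add: M_def algebra_simps)
  qed
  have lim0: "(\<lambda>n. M * K * real n powr (1 - s0)) \<longlonglongrightarrow> 0"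
    using s0 by (rule powr_lim0)
  have "eventually (\<lambda>n. norm (R (Suc (Suc n))) \<le> M * K * real n powr (1 - s0)) sequentially"
    using eventually_ge_at_top[of "1::nat"]
  proof eventually_elim
    case (elim n)
    have "norm (R (Suc (Suc n))) = norm (\<sigma> (of_nat (Suc (Suc n)))) * norm (t (Suc n))"
      by (simp add: R_def norm_mult del: of_nat_Suc)
    also have "\<dots> \<le> (M * real n ^ 2) * (K * real n powr (- 1 - s0))"
      using \<sigma>b[OF elim] K[OF elim] by (intro mult_mono) (auto simp: M_def)
    also have "\<dots> = M * K * (real n powr 2 * real n powr (- 1 - s0))"
      by simp
    also have "real n powr 2 * real n powr (- 1 - s0) = real n powr (1 - s0)"
      by (simp only: powr_add[symmetric]) (simp add: algebra_simps)
    finally show ?case .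
  qed
  then have "(\<lambda>n. R (Suc (Suc n))) \<longlonglongrightarrow> 0" using lim0 by (rule Lim_null_comparison)
  then have Rlim: "R \<longlonglongrightarrow> 0" by (rule LIMSEQ_imp_Suc[OF LIMSEQ_imp_Suc])
  have "(\<lambda>n. R (Suc n) - R n) sums (0 - R 0)" by (rule telescope_sums[OF Rlim])
  moreover have "X = (\<lambda>n. R (Suc n) - R n)" using tele by (intro ext) simp
  moreover have "R 0 = 0" unfolding R_def by simp
  ultimately have X0: "X sums 0" by simp
  have "X sums (of_nat k * S * suminf t - a*(a-1-2*S) * suminf u + al*ga * suminf v)"
    unfolding X_def
    by (intro sums_add sums_diff sums_mult summable_sums sumt sumu sumv)
  then have eq0: "of_nat k * S * suminf t - a*(a-1-2*S) * suminf u + al*ga * suminf v = 0"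
    using X0 sums_unique2 by blast
  have kS: "of_nat k * S \<noteq> 0" using assms(1) assms(6) by (simp add: S_def)
  have q: "of_nat k * S * suminf t = a*(a-1-2*S) * suminf u - al*ga * suminf v"
    using eq0 by algebra
  have "suminf t = (a*(a-1-2*S) * suminf u - al*ga * suminf v) / (of_nat k * S)"
    using q kS by (simp add: eq_divide_eq ac_simps)
  also have "\<dots> = a * (a - 1 - 2 * S) / (of_nat k * S) * suminf u - al * ga / (of_nat k * S) * suminf v"
    by (simp add: diff_divide_distrib)
  finally have "suminf t = a * (a - 1 - 2 * S) / (of_nat k * S) * suminf u - al * ga / (of_nat k * S) * suminf v" .
  then show ?thesis unfolding G1 G2 G3 S_def al_def ga_def .
qed
end
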